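(* Let $G=(V,E)$ be a connected graph with $V=\{1,\ldots,n\}$, $\mathbf{w}\colon E\to\{1,\ldots,N\}$, and let $\mathcal{T}$ be an elimination tree of $G$. Let $v$ be an internal node of $\mathcal{T}$ with children $u_1,\ldots,u_o$, and let $J'\subseteq \mathtt{tail}^+[v]$. Then $$Q_{[v]}(J')=\prod_{i\in[o]}P_{(u_i)}(J').$$
   Context: An elimination tree of $G=(V,E)$ is a rooted tree on vertex set $V$ such that for every edge $\{u,v\}\in E$ one of $u,v$ is an ancestor of the other. For a node $v$: $\mathtt{tree}[v]$ is the set of nodes of the subtree rooted at $v$ (including $v$), $\mathtt{tree}(v)=\mathtt{tree}[v]\setminus\{v\}$; $\mathtt{tail}[v]$ is the set of ancestors of $v$ including $v$, $\mathtt{tail}(v)=\mathtt{tail}[v]\setminus\{v\}$. For $W\subseteq V$ let $W^+=\{u,u+n\mid u\in W\}\subseteq[2n]$, and write $\mathtt{tree}^+[v]=(\mathtt{tree}[v])^+$ etc. For $U\subseteq V$, $\delta[U]=\{e\in E\mid e\cap U\neq\emptyset\}$. For $\mathbf{w}$ and $F\subseteq E$, $\mathbf{w}(F)=\sum_{e\in F}\mathbf{w}(e)$. Define $\mathtt{tpl}(W)=\{(E_1,E_2,L)\mid E_1,E_2\subseteq\delta[W],\ L\subseteq W,\ E_1\cap E_2=\emptyset\}$; $\mathtt{mon}(E_1,E_2,L)=x^{|E_1|}y^{|E_2|}z^{|L|}\omega^{\mathbf{w}(E_1\cup E_2)}\in\mathbb{Z}[x,y,z,\omega]$; for $I\subseteq[2n]$,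 $\mathtt{dsj}(I)$ is the set of triples $(E_1,E_2,L)$ such that $\{s,t\}\cap I=\emptyset$ for all $\{s,t\}\in E_1$, $\{s+n,t+n\}\cap I=\emptyset$ for all $\{s,t\}\in E_2$, and $L^+\cap I=\emptyset$. Iverson bracket $[p]$ is $1$ if $p$ holds and $0$ otherwise. For a node $v$ and $J\subseteq\mathtt{tail}^+(v)$, $$P_{(v)}(J)=\sum_{(E_1,E_2,L)\in\mathtt{tpl}(\mathtt{tree}[v])}\mathtt{mon}(E_1,E_2,L)\sum_{K\subseteq\mathtt{tree}^+[v]}(-1)^{|K|}\,[(E_1,E_2,L)\in\mathtt{dsj}(J\cup K)],$$ and for $J'\subseteq\mathtt{tail}^+[v]$, $$Q_{[v]}(J')=\sum_{(E_1,E_2,L)\in\mathtt{tpl}(\mathtt{tree}(v))}\mathtt{mon}(E_1,E_2,L)\sum_{K'\subseteq\mathtt{tree}^+(v)}(-1)^{|K'|}\,[(E_1,E_2,L)\in\mathtt{dsj}(J'\cup K')].$$ *)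

theory Defs
  imports Main
begin

definition simple_graph :: "nat \<Rightarrow> nat set set \<Rightarrow> bool" where
  "simple_graph n E \<longleftrightarrow> (\<forall>e\<in>E. e \<subseteq> {1..n} \<and> card e = 2)"

definition graph_connected :: "nat \<Rightarrow> nat set set \<Rightarrow> bool" where
  "graph_connected n E \<longleftrightarrow>
     (\<forall>u\<in>{1..n}. \<forall>v\<in>{1..n}. (u, v) \<in> {(a, b). {a, b} \<in> E}\<^sup>*)"

definition rooted_tree :: "nat set \<Rightarrow> (nat \<Rightarrow> nat) \<Rightarrow> nat \<Rightarrow> bool" where
  "rooted_tree V par r \<longleftrightarrow> r \<in> V \<and> par r = r \<and>
     (\<forall>v\<in>V - {r}. par v \<in> V \<and> par v \<noteq> v) \<and>
     (\<forall>v\<in>V. \<exists>k. (par ^^ k) v = r)"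

definition tailC :: "(nat \<Rightarrow> nat) \<Rightarrow> nat \<Rightarrow> nat set" where
  "tailC par v = {u. \<exists>k. (par ^^ k) v = u}"

definition treeC :: "nat set \<Rightarrow> (nat \<Rightarrow> nat) \<Rightarrow> nat \<Rightarrow> nat set" where
  "treeC V par v = {u\<in>V. v \<in> tailC par u}"

definition children :: "nat set \<Rightarrow> (nat \<Rightarrow> nat) \<Rightarrow> nat \<Rightarrow> nat set" where
  "children V par v = {u\<in>V. u \<noteq> v \<and> par u = v}"

definition elimination_tree :: "nat \<Rightarrow> nat set set \<Rightarrow> (nat \<Rightarrow> nat) \<Rightarrow> nat \<Rightarrow> bool" where
  "elimination_tree n E par r \<longleftrightarrow> rooted_tree {1..n} par r \<and>
     (\<forall>a b. {a, b} \<in> E \<longrightarrow> a \<in> tailC par b \<or> b \<in> tailC par a)"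

definition plusS :: "nat \<Rightarrow> nat set \<Rightarrow> nat set" where
  "plusS n W = W \<union> (\<lambda>u. u + n) ` W"

definition delta :: "nat set set \<Rightarrow> nat set \<Rightarrow> nat set set" where
  "delta E U = {e\<in>E. e \<inter> U \<noteq> {}}"

definition tpl :: "nat set set \<Rightarrow> nat set \<Rightarrow> (nat set set \<times> nat set set \<times> nat set) set" where
  "tpl E W = {(E1, E2, L). E1 \<subseteq> delta E W \<and> E2 \<subseteq> delta E W \<and> L \<subseteq> W \<and> E1 \<inter> E2 = {}}"

definition mon :: "(nat set \<Rightarrow> nat) \<Rightarrow> 'a::comm_ring_1 \<Rightarrow> 'a \<Rightarrow> 'a \<Rightarrow> 'a
                   \<Rightarrow> nat set set \<times> nat set set \<times> nat set \<Rightarrow> 'a" where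
  "mon w x y z om t = (case t of (E1, E2, L) \<Rightarrow>
     x ^ card E1 * y ^ card E2 * z ^ card L * om ^ (\<Sum>e\<in>E1 \<union> E2. w e))"

definition dsj :: "nat \<Rightarrow> nat set \<Rightarrow> nat set set \<times> nat set set \<times> nat set \<Rightarrow> bool" where
  "dsj n I t = (case t of (E1, E2, L) \<Rightarrow>
     (\<forall>e\<in>E1. e \<inter> I = {}) \<and> (\<forall>e\<in>E2. (\<lambda>s. s + n) ` e \<inter> I = {}) \<and> plusS n L \<inter> I = {})"

definition Pv :: "nat \<Rightarrow> nat set set \<Rightarrow> (nat set \<Rightarrow> nat) \<Rightarrow> (nat \<Rightarrow> nat)
                  \<Rightarrow> 'a::comm_ring_1 \<Rightarrow> 'a \<Rightarrow> 'a \<Rightarrow> 'a \<Rightarrow> nat \<Rightarrow> nat set \<Rightarrow> 'a" where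
  "Pv n E w par x y z om v J =
     (\<Sum>t\<in>tpl E (treeC {1..n} par v). mon w x y z om t *
        (\<Sum>K\<in>Pow (plusS n (treeC {1..n} par v)). (-1) ^ card K * of_bool (dsj n (J \<union> K) t)))"

definition Qv :: "nat \<Rightarrow> nat set set \<Rightarrow> (nat set \<Rightarrow> nat) \<Rightarrow> (nat \<Rightarrow> nat)
                  \<Rightarrow> 'a::comm_ring_1 \<Rightarrow> 'a \<Rightarrow> 'a \<Rightarrow> 'a \<Rightarrow> nat \<Rightarrow> nat set \<Rightarrow> 'a" where
  "Qv n E w par x y z om v J' =
     (\<Sum>t\<in>tpl E (treeC {1..n} par v - {v}). mon w x y z om t *
        (\<Sum>K'\<in>Pow (plusS n (treeC {1..n} par v - {v})). (-1) ^ card K' * of_bool (dsj n (J' \<union> K') t)))"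

end

theory Submission imports Defs begin

definition FF :: "nat \<Rightarrow> nat set set \<Rightarrow> (nat set \<Rightarrow> nat) \<Rightarrow> 'a::comm_ring_1 \<Rightarrow> 'a \<Rightarrow> 'a \<Rightarrow> 'a \<Rightarrow> nat set \<Rightarrow> nat set \<Rightarrow> 'a" where
  "FF n E w x y z om J U =
     (\<Sum>t\<in>tpl E U. mon w x y z om t *
        (\<Sum>K\<in>Pow (plusS n U). (-1) ^ card K * of_bool (dsj n (J \<union> K) t)))"

definition SS :: "nat \<Rightarrow> nat set \<Rightarrow> nat set \<Rightarrow> nat set set \<times> nat set set \<times> nat set \<Rightarrow> 'a::comm_ring_1" where
  "SS n J U t = (\<Sum>K\<in>Pow (plusS n U). (-1) ^ card K * of_bool (dsj n (J \<union> K) t))"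

definition sep :: "nat set set \<Rightarrow> nat set \<Rightarrow> nat set \<Rightarrow> bool" where
  "sep E U W \<longleftrightarrow> U \<inter> W = {} \<and> (\<forall>e\<in>E. e \<inter> U = {} \<or> e \<inter> W = {})"

definition comb :: "(nat set set \<times> nat set set \<times> nat set) \<times> (nat set set \<times> nat set set \<times> nat set) \<Rightarrow> nat set set \<times> nat set set \<times> nat set" where
  "comb p = (case p of ((A1,A2,A3),(B1,B2,B3)) \<Rightarrow> (A1 \<union> B1, A2 \<union> B2, A3 \<union> B3))"

lemma pow_bij:
  assumes "A \<inter> B = {}"
  shows "bij_betw (\<lambda>(K1,K2). K1 \<union> K2) (Pow A \<times> Pow B) (Pow (A \<union> B))"
  by (rule bij_betw_byWitness[where f'="\<lambda>K. (K \<inter> A, K \<inter> B)"]) (use assms in auto)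

lemma delta_un: "delta E (U \<union> W) = delta E U \<union> delta E W"
  unfolding delta_def by auto

lemma delta_disj: "sep E U W \<Longrightarrow> delta E U \<inter> delta E W = {}"
  unfolding delta_def sep_def by auto

lemma comb_bij:
  assumes "sep E U W"
  shows "bij_betw comb (tpl E U \<times> tpl E W) (tpl E (U \<union> W))"
proof (rule bij_betw_byWitness[where f'="\<lambda>(E1,E2,L). ((E1 \<inter> delta E U, E2 \<inter> delta E U, L \<inter> U),
      (E1 \<inter> delta E W, E2 \<inter> delta E W, L \<inter> W))"])
  have d: "delta E U \<inter> delta E W = {}" using delta_disj[OF assms] .
  have uw: "U \<inter> W = {}" using assms unfolding sep_def by auto
  show "\<forall>a\<in>tpl E U \<times> tpl E W.
       (case comb a of (E1, E2, L) \<Rightarrow> ((E1 \<inter> delta E U, E2 \<inter> delta E U, L \<inter> U), E1 \<inter> delta E W, E2 \<inter> delta E W, L \<inter> W)) = a"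
    using d uw unfolding tpl_def comb_def by auto
  show "\<forall>a'\<in>tpl E (U \<union> W). comb (case a' of (E1, E2, L) \<Rightarrow> ((E1 \<inter> delta E U, E2 \<inter> delta E U, L \<inter> U), E1 \<inter> delta E W, E2 \<inter> delta E W, L \<inter> W)) = a'"
    unfolding tpl_def comb_def delta_un by auto
  show "comb ` (tpl E U \<times> tpl E W) \<subseteq> tpl E (U \<union> W)"
    using d unfolding tpl_def comb_def delta_un by auto
  show "(\<lambda>(E1, E2, L). ((E1 \<inter> delta E U, E2 \<inter> delta E U, L \<inter> U), E1 \<inter> delta E W, E2 \<inter> delta E W, L \<inter> W)) ` tpl E (U \<union> W) \<subseteq> tpl E U \<times> tpl E W"
    unfolding tpl_def comb_def delta_un by auto
qed

lemma mon_comb: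
  assumes "sep E U W" "finite E" "t1 \<in> tpl E U" "t2 \<in> tpl E W" "finite U" "finite W"
  shows "mon w x y z om (comb (t1, t2)) = mon w x y z om t1 * mon w x y z om t2"
proof -
  obtain A1 A2 A3 where t1: "t1 = (A1,A2,A3)" by (cases t1) auto
  obtain B1 B2 B3 where t2: "t2 = (B1,B2,B3)" by (cases t2) auto
  have d: "delta E U \<inter> delta E W = {}" using delta_disj[OF assms(1)] .
  have uw: "U \<inter> W = {}" using assms unfolding sep_def by auto
  have fd: "finite (delta E V)" for V using assms(2) unfolding delta_def by auto
  have A: "A1 \<subseteq> delta E U" "A2 \<subseteq> delta E U" "A3 \<subseteq> U" using assms(3) t1 unfolding tpl_def by auto
  have B: "B1 \<subseteq> delta E W" "B2 \<subseteq> delta E W" "B3 \<subseteq> W" using assms(4) t2 unfolding tpl_def by auto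
  have fA: "finite A1" "finite A2" using A fd finite_subset by blast+
  have fB: "finite B1" "finite B2" using B fd finite_subset by blast+
  have fU: "finite A3" "finite B3" using A B assms(5,6) finite_subset by blast+
  have c1: "card (A1 \<union> B1) = card A1 + card B1"
    by (rule card_Un_disjoint) (use fA fB A B d in auto)
  have c2: "card (A2 \<union> B2) = card A2 + card B2"
    by (rule card_Un_disjoint) (use fA fB A B d in auto)
  have c3: "card (A3 \<union> B3) = card A3 + card B3"
    by (rule card_Un_disjoint) (use fU A B uw in auto)
  have eq: "A1 \<union> B1 \<union> (A2 \<union> B2) = (A1 \<union> A2) \<union> (B1 \<union> B2)" by auto
  have s: "(\<Sum>e\<in>A1 \<union> B1 \<union> (A2 \<union> B2). w e) = (\<Sum>e\<in>A1 \<union> A2. w e) + (\<Sum>e\<in>B1 \<union> B2. w e)"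
    unfolding eq by (rule sum.union_disjoint) (use fA fB A B d in auto)
  show ?thesis unfolding t1 t2 comb_def mon_def
    by (simp add: c1 c2 c3 s power_add algebra_simps)
qed

lemma low_in: "a \<le> n \<Longrightarrow> a \<in> plusS n W \<Longrightarrow> W \<subseteq> {1..n} \<Longrightarrow> a \<in> W"
  unfolding plusS_def by auto
lemma high_in: "a \<in> plusS n W \<Longrightarrow> W \<subseteq> {1..n} \<Longrightarrow> a = b + n \<Longrightarrow> 0 < b \<Longrightarrow> b \<in> W"
  unfolding plusS_def by force

lemma dsj_comb:
  assumes "sep E U W" "\<forall>e\<in>E. e \<subseteq> {1..n}" "U \<subseteq> {1..n}" "W \<subseteq> {1..n}"
    "t1 \<in> tpl E U" "t2 \<in> tpl E W" "K1 \<subseteq> plusS n U" "K2 \<subseteq> plusS n W"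
  shows "dsj n (J \<union> (K1 \<union> K2)) (comb (t1, t2)) \<longleftrightarrow> dsj n (J \<union> K1) t1 \<and> dsj n (J \<union> K2) t2"
proof -
  obtain A1 A2 A3 where t1: "t1 = (A1,A2,A3)" by (cases t1) auto
  obtain B1 B2 B3 where t2: "t2 = (B1,B2,B3)" by (cases t2) auto
  have uw: "U \<inter> W = {}" using assms unfolding sep_def by auto
  have A: "A1 \<subseteq> delta E U" "A2 \<subseteq> delta E U" "A3 \<subseteq> U" using assms(5) t1 unfolding tpl_def by auto
  have B: "B1 \<subseteq> delta E W" "B2 \<subseteq> delta E W" "B3 \<subseteq> W" using assms(6) t2 unfolding tpl_def by auto
  have eU: "e \<subseteq> {1..n} \<and> e \<inter> W = {}" if "e \<in> delta E U" for e
    using that assms(1,2) unfolding delta_def sep_def by auto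
  have eW: "e \<subseteq> {1..n} \<and> e \<inter> U = {}" if "e \<in> delta E W" for e
    using that assms(1,2) unfolding delta_def sep_def by auto
  have k1: "e \<inter> K2 = {}" if "e \<subseteq> {1..n}" "e \<inter> W = {}" for e
    using that low_in[of _ n W] assms(4,8) by fastforce
  have k1': "e \<inter> K1 = {}" if "e \<subseteq> {1..n}" "e \<inter> U = {}" for e
    using that low_in[of _ n U] assms(3,7) by fastforce
  have k2: "(\<lambda>s. s + n) ` e \<inter> K2 = {}" if "e \<subseteq> {1..n}" "e \<inter> W = {}" for e
  proof -
    { fix s assume a: "s \<in> e" "s + n \<in> K2"
      have "0 < s" "s + n \<in> plusS n W" using a that assms(4,8) by auto
      then have "s \<in> W" using high_in[of "s+n" n W s] assms(4,8) by auto
      then have False using a that by auto }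
    then show ?thesis by blast
  qed
  have k2': "(\<lambda>s. s + n) ` e \<inter> K1 = {}" if "e \<subseteq> {1..n}" "e \<inter> U = {}" for e
  proof -
    { fix s assume a: "s \<in> e" "s + n \<in> K1"
      have "0 < s" "s + n \<in> plusS n U" using a that assms(3,7) by auto
      then have "s \<in> U" using high_in[of "s+n" n U s] assms(3,7) by auto
      then have False using a that by auto }
    then show ?thesis by blast
  qed
  have l1: "plusS n A3 \<inter> K2 = {}"
  proof -
    { fix a assume a: "a \<in> plusS n A3" "a \<in> K2"
      have "a \<in> A3 \<or> (\<exists>b\<in>A3. a = b + n)" using a unfolding plusS_def by auto
      then have False
      proof
        assume h: "a \<in> A3"
        have "a \<le> n" "a \<in> plusS n W" using h a A(3) assms(3,4,8) by auto
        then have "a \<in> W" using low_in[of a n W] assms(3,4,8) by auto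
        then show False using h A(3) uw by auto
      next
        assume "\<exists>b\<in>A3. a = b + n"
        then obtain b where "b \<in> A3" "a = b + n" by auto
        note hb = this
        have "0 < b" "a \<in> plusS n W" using hb a A(3) assms(3,4,8) by auto
        then have "b \<in> W" using high_in[of a n W b] hb assms(3,4,8) by auto
        then show False using hb A(3) uw by auto
      qed }
    then show ?thesis by blast
  qed
  have l2: "plusS n B3 \<inter> K1 = {}"
  proof -
    { fix a assume a: "a \<in> plusS n B3" "a \<in> K1"
      have "a \<in> B3 \<or> (\<exists>b\<in>B3. a = b + n)" using a unfolding plusS_def by auto
      then have False
      proof
        assume h: "a \<in> B3"
        have "a \<le> n" "a \<in> plusS n U" using h a B(3) assms(3,4,7) by auto
        then have "a \<in> U" using low_in[of a n U] assms(3,4,7) by auto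
        then show False using h B(3) uw by auto
      next
        assume "\<exists>b\<in>B3. a = b + n"
        then obtain b where "b \<in> B3" "a = b + n" by auto
        note hb = this
        have "0 < b" "a \<in> plusS n U" using hb a B(3) assms(3,4,7) by auto
        then have "b \<in> U" using high_in[of a n U b] hb assms(3,4,7) by auto
        then show False using hb B(3) uw by auto
      qed }
    then show ?thesis by blast
  qed
  have pu: "plusS n (A3 \<union> B3) = plusS n A3 \<union> plusS n B3" unfolding plusS_def by auto
  have a1: "e \<inter> K2 = {}" if "e \<in> A1" for e
  proof -
    have "e \<in> delta E U" using that A(1) by blast
    then have "e \<subseteq> {1..n}" "e \<inter> W = {}" using eU by blast+
    then show ?thesis by (rule k1)
  qed
  have b1: "e \<inter> K1 = {}" if "e \<in> B1" for e
  proof -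
    have "e \<in> delta E W" using that B(1) by blast
    then have "e \<subseteq> {1..n}" "e \<inter> U = {}" using eW by blast+
    then show ?thesis by (rule k1')
  qed
  have a2: "(\<lambda>s. s + n) ` e \<inter> K2 = {}" if "e \<in> A2" for e
  proof -
    have "e \<in> delta E U" using that A(2) by blast
    then have "e \<subseteq> {1..n}" "e \<inter> W = {}" using eU by blast+
    then show ?thesis by (rule k2)
  qed
  have b2: "(\<lambda>s. s + n) ` e \<inter> K1 = {}" if "e \<in> B2" for e
  proof -
    have "e \<in> delta E W" using that B(2) by blast
    then have "e \<subseteq> {1..n}" "e \<inter> U = {}" using eW by blast+
    then show ?thesis by (rule k2')
  qed
  have X1: "(\<forall>e\<in>A1 \<union> B1. e \<inter> (J \<union> (K1 \<union> K2)) = {}) \<longleftrightarrow>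
     (\<forall>e\<in>A1. e \<inter> (J \<union> K1) = {}) \<and> (\<forall>e\<in>B1. e \<inter> (J \<union> K2) = {})"
    using a1 b1 by (simp add: Int_Un_distrib ball_Un; blast)
  have X2: "(\<forall>e\<in>A2 \<union> B2. (\<lambda>s. s + n) ` e \<inter> (J \<union> (K1 \<union> K2)) = {}) \<longleftrightarrow>
     (\<forall>e\<in>A2. (\<lambda>s. s + n) ` e \<inter> (J \<union> K1) = {}) \<and> (\<forall>e\<in>B2. (\<lambda>s. s + n) ` e \<inter> (J \<union> K2) = {})"
    using a2 b2 by (simp add: Int_Un_distrib ball_Un; blast)
  have X3: "plusS n (A3 \<union> B3) \<inter> (J \<union> (K1 \<union> K2)) = {} \<longleftrightarrow>
     plusS n A3 \<inter> (J \<union> K1) = {} \<and> plusS n B3 \<inter> (J \<union> K2) = {}"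
    unfolding pu using l1 l2 by (simp add: Int_Un_distrib Int_Un_distrib2; blast)
  have D: "dsj n I (comb ((A1,A2,A3),(B1,B2,B3))) = ((\<forall>e\<in>A1 \<union> B1. e \<inter> I = {}) \<and> (\<forall>e\<in>A2 \<union> B2. (\<lambda>s. s + n) ` e \<inter> I = {}) \<and> plusS n (A3 \<union> B3) \<inter> I = {})" for I
    unfolding comb_def dsj_def by simp
  show ?thesis unfolding t1 t2 D unfolding dsj_def using X1 X2 X3 by (simp add: conj_ac)
qed

lemma plusS_un: "plusS n (U \<union> W) = plusS n U \<union> plusS n W" unfolding plusS_def by auto

lemma plusS_disj: "U \<inter> W = {} \<Longrightarrow> U \<subseteq> {1..n} \<Longrightarrow> W \<subseteq> {1..n} \<Longrightarrow> plusS n U \<inter> plusS n W = {}"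
proof -
  assume a: "U \<inter> W = {}" "U \<subseteq> {1..n}" "W \<subseteq> {1..n}"
  have 1: False if "u + n \<in> U" "u \<in> W" for u
  proof -
    have "u + n \<le> n" "1 \<le> u" using that a by auto
    then show False by simp
  qed
  have 2: False if "u + n \<in> W" "u \<in> U" for u
  proof -
    have "u + n \<le> n" "1 \<le> u" using that a by auto
    then show False by simp
  qed
  show ?thesis unfolding plusS_def using a(1) 1 2 by auto
qed

lemma finite_plusS: "finite U \<Longrightarrow> finite (plusS n U)" unfolding plusS_def by auto

lemma SS_comb:
  assumes "sep E U W" "\<forall>e\<in>E. e \<subseteq> {1..n}" "U \<subseteq> {1..n}" "W \<subseteq> {1..n}"
    "t1 \<in> tpl E U" "t2 \<in> tpl E W"
  shows "(SS n J (U \<union> W) (comb (t1, t2)) :: 'a::comm_ring_1) = SS n J U t1 * SS n J W t2"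
proof -
  have uw: "U \<inter> W = {}" using assms unfolding sep_def by auto
  have fU: "finite U" "finite W" using assms(3,4) finite_subset by blast+
  let ?PU = "plusS n U" and ?PW = "plusS n W"
  have d: "?PU \<inter> ?PW = {}" using plusS_disj[OF uw assms(3,4)] .
  have fP: "finite ?PU" "finite ?PW" using fU finite_plusS by blast+
  have "SS n J U t1 * SS n J W t2 = (\<Sum>K1\<in>Pow ?PU. \<Sum>K2\<in>Pow ?PW.
      ((-1) ^ card K1 * of_bool (dsj n (J \<union> K1) t1)) * ((-1) ^ card K2 * of_bool (dsj n (J \<union> K2) t2)) :: 'a)"
    unfolding SS_def by (rule sum_product)
  also have "\<dots> = (\<Sum>(K1,K2)\<in>Pow ?PU \<times> Pow ?PW.
      ((-1) ^ card K1 * of_bool (dsj n (J \<union> K1) t1)) * ((-1) ^ card K2 * of_bool (dsj n (J \<union> K2) t2)) :: 'a)"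
    by (rule sum.cartesian_product)
  also have "\<dots> = (\<Sum>(K1,K2)\<in>Pow ?PU \<times> Pow ?PW.
      (-1) ^ card (K1 \<union> K2) * of_bool (dsj n (J \<union> (K1 \<union> K2)) (comb (t1, t2))) :: 'a)"
  proof (rule sum.cong[OF refl], clarify)
    fix K1 K2 assume k: "K1 \<subseteq> ?PU" "K2 \<subseteq> ?PW"
    have c: "card (K1 \<union> K2) = card K1 + card K2"
      by (rule card_Un_disjoint) (use k fP d finite_subset in auto)
    show "((-1) ^ card K1 * of_bool (dsj n (J \<union> K1) t1)) * ((-1) ^ card K2 * of_bool (dsj n (J \<union> K2) t2)) =
      ((-1) ^ card (K1 \<union> K2) * of_bool (dsj n (J \<union> (K1 \<union> K2)) (comb (t1, t2))) :: 'a)"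
      unfolding c dsj_comb[OF assms k] by (simp add: power_add algebra_simps)
  qed
  also have "\<dots> = (\<Sum>K\<in>Pow (?PU \<union> ?PW). (-1) ^ card K * of_bool (dsj n (J \<union> K) (comb (t1, t2))))"
    using sum.reindex_bij_betw[OF pow_bij[OF d], of "\<lambda>K. (-1) ^ card K * of_bool (dsj n (J \<union> K) (comb (t1, t2))) :: 'a"]
    by (simp add: case_prod_unfold)
  also have "\<dots> = SS n J (U \<union> W) (comb (t1, t2))" unfolding SS_def plusS_un ..
  finally show ?thesis by simp
qed

lemma FF_SS: "FF n E w x y z om J U = (\<Sum>t\<in>tpl E U. mon w x y z om t * SS n J U t)"
  unfolding FF_def SS_def ..

lemma FF_union:
  assumes "sep E U W" "finite E" "\<forall>e\<in>E. e \<subseteq> {1..n}" "U \<subseteq> {1..n}" "W \<subseteq> {1..n}"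
  shows "FF n E w x y z om J (U \<union> W) = FF n E w x y z om J U * FF n E w x y z om J W"
proof -
  have fU: "finite U" "finite W" using assms(4,5) finite_subset by blast+
  have "FF n E w x y z om J U * FF n E w x y z om J W =
     (\<Sum>t1\<in>tpl E U. \<Sum>t2\<in>tpl E W. (mon w x y z om t1 * SS n J U t1) * (mon w x y z om t2 * SS n J W t2))"
    unfolding FF_SS by (rule sum_product)
  also have "\<dots> = (\<Sum>(t1,t2)\<in>tpl E U \<times> tpl E W. (mon w x y z om t1 * SS n J U t1) * (mon w x y z om t2 * SS n J W t2))"
    by (rule sum.cartesian_product)
  also have "\<dots> = (\<Sum>(t1,t2)\<in>tpl E U \<times> tpl E W. mon w x y z om (comb (t1,t2)) * SS n J (U \<union> W) (comb (t1,t2)))"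
  proof (rule sum.cong[OF refl], clarify)
    fix t1 t2 assume t: "t1 \<in> tpl E U" "t2 \<in> tpl E W"
    show "(mon w x y z om t1 * SS n J U t1) * (mon w x y z om t2 * SS n J W t2) =
       mon w x y z om (comb (t1,t2)) * SS n J (U \<union> W) (comb (t1,t2))"
      unfolding mon_comb[OF assms(1,2) t fU] SS_comb[OF assms(1,3,4,5) t] by (simp add: algebra_simps)
  qed
  also have "\<dots> = (\<Sum>t\<in>tpl E (U \<union> W). mon w x y z om t * SS n J (U \<union> W) t)"
    using sum.reindex_bij_betw[OF comb_bij[OF assms(1)], of "\<lambda>t. mon w x y z om t * SS n J (U \<union> W) t"]
    by (simp add: case_prod_unfold)
  finally show ?thesis unfolding FF_SS by simp
qed


lemma FF_empty: "FF n E w x y z om J {} = 1"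
proof -
  have "tpl E {} = {({},{},{})}" unfolding tpl_def delta_def by auto
  moreover have "plusS n {} = {}" unfolding plusS_def by auto
  ultimately show ?thesis unfolding FF_def by (simp add: mon_def dsj_def)
qed

lemma FF_prod:
  assumes "finite C" "\<forall>c\<in>C. T c \<subseteq> {1..n}" "\<forall>c1\<in>C. \<forall>c2\<in>C. c1 \<noteq> c2 \<longrightarrow> sep E (T c1) (T c2)"
    "finite E" "\<forall>e\<in>E. e \<subseteq> {1..n}"
  shows "FF n E w x y z om J (\<Union>c\<in>C. T c) = (\<Prod>c\<in>C. FF n E w x y z om J (T c))"
  using assms(1-3)
proof (induction C rule: finite_induct)
  case empty
  then show ?case by (simp add: FF_empty)
next
  case (insert c C)
  have pw: "sep E (T c) (T c')" if "c' \<in> C" for c'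
  proof -
    have "c \<noteq> c'" using that insert.hyps(2) by blast
    then show ?thesis using insert.prems(2) that by blast
  qed
  have s: "sep E (T c) (\<Union>c\<in>C. T c)"
    using pw unfolding sep_def by blast
  have "FF n E w x y z om J (\<Union>c\<in>insert c C. T c) = FF n E w x y z om J (T c \<union> (\<Union>c\<in>C. T c))" by simp
  also have "\<dots> = FF n E w x y z om J (T c) * FF n E w x y z om J (\<Union>c\<in>C. T c)"
  proof (rule FF_union[OF s assms(4,5)])
    show "T c \<subseteq> {1..n}" using insert.prems(1) by blast
    show "(\<Union>c\<in>C. T c) \<subseteq> {1..n}" using insert.prems(1) by blast
  qed
  also have "\<dots> = FF n E w x y z om J (T c) * (\<Prod>c\<in>C. FF n E w x y z om J (T c))"
    using insert by simp
  finally show ?case using insert.hyps by simp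
qed

lemma funpow_fix: "f r = r \<Longrightarrow> (f ^^ k) r = r"
  by (induction k) auto

lemma rt_closed: "rooted_tree V par r \<Longrightarrow> u \<in> V \<Longrightarrow> par u \<in> V"
  unfolding rooted_tree_def by (cases "u = r") auto

lemma rt_closed_pow: "rooted_tree V par r \<Longrightarrow> u \<in> V \<Longrightarrow> (par ^^ k) u \<in> V"
  by (induction k) (auto intro: rt_closed)

lemma rt_cycle:
  assumes "rooted_tree V par r" "u \<in> V" "(par ^^ m) u = u" "m \<ge> 1"
  shows "u = r"
proof -
  obtain k where k: "(par ^^ k) u = r" using assms(1,2) unfolding rooted_tree_def by blast
  have pr: "par r = r" using assms(1) unfolding rooted_tree_def by blast
  have mk: "(par ^^ (m * j)) u = u" for j
  proof (induction j)
    case 0 then show ?case by simp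
  next
    case (Suc j)
    have "(par ^^ (m * Suc j)) u = (par ^^ m) ((par ^^ (m * j)) u)"
      by (simp add: funpow_add)
    then show ?case using Suc assms(3) by simp
  qed
  have "m * k \<ge> k" using assms(4) by simp
  then have "(par ^^ (m * k)) u = (par ^^ (m * k - k)) ((par ^^ k) u)"
    by (metis funpow_add le_add_diff_inverse2 comp_apply)
  also have "\<dots> = r" using k funpow_fix[of par r] pr by simp
  finally show ?thesis using mk by simp
qed

lemma rt_two_children:
  assumes "rooted_tree V par r" "v \<in> V" "c1 \<in> children V par v" "c2 \<in> children V par v"
    "(par ^^ a) u = c1" "(par ^^ b) u = c2"
  shows "c1 = c2"
proof -
  have pr: "par r = r" using assms(1) unfolding rooted_tree_def by blast
  have main: "c1 = c2" if ab: "a \<le> b" and h1: "(par ^^ a) u = c1" and h2: "(par ^^ b) u = c2"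
    and cc1: "c1 \<in> children V par v" and cc2: "c2 \<in> children V par v" for a b c1 c2
  proof (rule ccontr)
    assume ne: "c1 \<noteq> c2"
    then have "a < b" using ab h1 h2 by (cases "a = b") auto
    then obtain d where d: "b = Suc d + a" by (metis add_Suc less_iff_Suc_add add.commute)
    have "c2 = (par ^^ d) (par ((par ^^ a) u))" using h2 d
      by (simp add: funpow_add funpow_Suc_right funpow_swap1 del: funpow.simps)
    also have "\<dots> = (par ^^ d) v" using h1 cc1 unfolding children_def by simp
    finally have c2: "c2 = (par ^^ d) v" .
    have "(par ^^ Suc d) v = v" using c2 cc2 unfolding children_def by simp
    then have "v = r" using rt_cycle[OF assms(1,2), of "Suc d"] by simp
    then have "c2 = v" using c2 funpow_fix[of par r] pr by simp
    then show False using cc2 unfolding children_def by simp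
  qed
  show ?thesis
  proof (cases "a \<le> b")
    case True then show ?thesis using main assms by blast
  next
    case False then show ?thesis using main[of b a c2 c1] assms by simp
  qed
qed


lemma tree_decomp:
  assumes rt: "rooted_tree V par r" and v: "v \<in> V"
  shows "treeC V par v - {v} = (\<Union>c\<in>children V par v. treeC V par c)"
proof (rule equalityI)
  have pr: "par r = r" using rt unfolding rooted_tree_def by blast
  show "(\<Union>c\<in>children V par v. treeC V par c) \<subseteq> treeC V par v - {v}"
  proof (rule subsetI)
    fix u assume "u \<in> (\<Union>c\<in>children V par v. treeC V par c)"
    then obtain c where c: "c \<in> children V par v" and u: "u \<in> treeC V par c" by blast
    from u obtain k where uV: "u \<in> V" and k: "(par ^^ k) u = c" unfolding treeC_def tailC_def by blast
    have sk: "(par ^^ Suc k) u = v" using k c unfolding children_def by simp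
    then have t: "u \<in> treeC V par v" using uV unfolding treeC_def tailC_def by blast
    have "u \<noteq> v"
    proof
      assume "u = v"
      then have "v = r" using rt_cycle[OF rt v, of "Suc k"] sk by simp
      then have "c = v" using k \<open>u = v\<close> funpow_fix[of par r] pr by simp
      then show False using c unfolding children_def by simp
    qed
    then show "u \<in> treeC V par v - {v}" using t by blast
  qed
  have step: "\<exists>c\<in>children V par v. u \<in> treeC V par c"
    if "u \<in> V" "(par ^^ k) u = v" "u \<noteq> v" for k u
    using that
  proof (induction k arbitrary: u)
    case 0 then show ?case by simp
  next
    case (Suc k)
    then have uV: "u \<in> V" and h: "(par ^^ Suc k) u = v" and ne: "u \<noteq> v" by auto
    show ?case
      proof (cases "par u = v")
        case True
        then have "u \<in> children V par v" using uV ne unfolding children_def by simp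
        moreover have "u \<in> treeC V par u" using uV unfolding treeC_def tailC_def
          by (auto intro: exI[of _ 0])
        ultimately show ?thesis by blast
      next
        case False
        have pV: "par u \<in> V" using rt_closed[OF rt uV] .
        have "(par ^^ k) (par u) = v" using h by (simp add: funpow_swap1)
        then obtain c where c: "c \<in> children V par v" "par u \<in> treeC V par c"
          using Suc.IH[OF pV _ False] by blast
        then obtain j where "(par ^^ j) (par u) = c" unfolding treeC_def tailC_def by blast
        then have "(par ^^ Suc j) u = c" by (simp add: funpow_swap1)
        then have "u \<in> treeC V par c" using uV unfolding treeC_def tailC_def by blast
        then show ?thesis using c by blast
      qed
  qed
  show "treeC V par v - {v} \<subseteq> (\<Union>c\<in>children V par v. treeC V par c)"
  proof (rule subsetI)
    fix u assume "u \<in> treeC V par v - {v}"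
    then obtain k where "u \<in> V" "(par ^^ k) u = v" "u \<noteq> v" unfolding treeC_def tailC_def by blast
    then show "u \<in> (\<Union>c\<in>children V par v. treeC V par c)" using step by blast
  qed
qed

lemma children_sep:
  assumes et: "elimination_tree n E par r" and sg: "simple_graph n E" and v: "v \<in> {1..n}"
    and c1: "c1 \<in> children {1..n} par v" and c2: "c2 \<in> children {1..n} par v" and ne: "c1 \<noteq> c2"
  shows "sep E (treeC {1..n} par c1) (treeC {1..n} par c2)"
proof -
  have rt: "rooted_tree {1..n} par r" using et unfolding elimination_tree_def by blast
  have disj: "treeC {1..n} par c1 \<inter> treeC {1..n} par c2 = {}"
  proof -
    { fix u assume "u \<in> treeC {1..n} par c1" "u \<in> treeC {1..n} par c2"
      then obtain a b where "(par ^^ a) u = c1" "(par ^^ b) u = c2" unfolding treeC_def tailC_def by blast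
      then have False using rt_two_children[OF rt v c1 c2] ne by blast }
    then show ?thesis by blast
  qed
  have edges: "e \<inter> treeC {1..n} par c1 = {} \<or> e \<inter> treeC {1..n} par c2 = {}" if e: "e \<in> E" for e
  proof (rule ccontr)
    assume "\<not> ?thesis"
    then obtain a b where a: "a \<in> e" "a \<in> treeC {1..n} par c1" and b: "b \<in> e" "b \<in> treeC {1..n} par c2" by blast
    have ab: "a \<noteq> b" using a b disj by blast
    have ce: "card e = 2" using sg e unfolding simple_graph_def by blast
    have fe: "finite e" using ce by (intro card_ge_0_finite) simp
    have "{a, b} \<subseteq> e" using a b by blast
    moreover have "card {a, b} = card e" using ab ce by simp
    ultimately have "{a, b} = e" using fe card_subset_eq by blast
    then have "{a, b} \<in> E" using e by simp
    then have tl: "a \<in> tailC par b \<or> b \<in> tailC par a" using et unfolding elimination_tree_def by blast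
    obtain i where i: "(par ^^ i) a = c1" using a unfolding treeC_def tailC_def by blast
    obtain j where j: "(par ^^ j) b = c2" using b unfolding treeC_def tailC_def by blast
    from tl show False
    proof
      assume "a \<in> tailC par b"
      then obtain k where k: "(par ^^ k) b = a" unfolding tailC_def by blast
      have "(par ^^ (i + k)) b = c1" using i k by (simp add: funpow_add)
      then show False using rt_two_children[OF rt v c1 c2 _ j] ne by blast
    next
      assume "b \<in> tailC par a"
      then obtain k where k: "(par ^^ k) a = b" unfolding tailC_def by blast
      have "(par ^^ (j + k)) a = c2" using j k by (simp add: funpow_add)
      then show False using rt_two_children[OF rt v c1 c2 i] ne by blast
    qed
  qed
  show ?thesis unfolding sep_def using disj edges by blast
qed

theorem lemma5:
  fixes n N :: nat and E :: "nat set set" and w :: "nat set \<Rightarrow> nat"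
    and par :: "nat \<Rightarrow> nat" and r v :: nat and J' :: "nat set"
    and x y z om :: "'a::comm_ring_1"
  assumes "simple_graph n E"
    and "graph_connected n E"
    and "\<forall>e\<in>E. w e \<in> {1..N}"
    and "elimination_tree n E par r"
    and "v \<in> {1..n}"
    and "children {1..n} par v \<noteq> {}"
    and "J' \<subseteq> plusS n (tailC par v)"
  shows "Qv n E w par x y z om v J' =
         (\<Prod>u\<in>children {1..n} par v. Pv n E w par x y z om u J')"
proof -
  have rt: "rooted_tree {1..n} par r" using assms(4) unfolding elimination_tree_def by blast
  have Esub: "\<forall>e\<in>E. e \<subseteq> {1..n}" using assms(1) unfolding simple_graph_def by blast
  have fE: "finite E"
  proof -
    have "E \<subseteq> Pow {1..n}" using Esub by blast
    then show ?thesis using finite_subset by blast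
  qed
  have fC: "finite (children {1..n} par v)" unfolding children_def by simp
  have Tsub: "\<forall>c\<in>children {1..n} par v. treeC {1..n} par c \<subseteq> {1..n}" unfolding treeC_def by blast
  have "Qv n E w par x y z om v J' = FF n E w x y z om J' (treeC {1..n} par v - {v})"
    unfolding Qv_def FF_def ..
  also have "\<dots> = FF n E w x y z om J' (\<Union>c\<in>children {1..n} par v. treeC {1..n} par c)"
    unfolding tree_decomp[OF rt assms(5)] ..
  also have "\<dots> = (\<Prod>c\<in>children {1..n} par v. FF n E w x y z om J' (treeC {1..n} par c))"
    by (rule FF_prod[OF fC Tsub _ fE Esub]) (use children_sep[OF assms(4,1,5)] in blast)
  also have "\<dots> = (\<Prod>u\<in>children {1..n} par v. Pv n E w par x y z om u J')"
    unfolding Pv_def FF_def ..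
  finally show ?thesis .
qed

end
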